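(* Let $G$ be a transitive permutation group on a finite set $\Omega$ and let $k$ be an integer with $k>1$. Then $G$ is imprimitive with a block of imprimitivity of size at least $k$ if and only if there exists a map $f:\Omega\to\Omega$ with kernel type $(k,1,1,\ldots,1)$ such that $G$ does not synchronize $f$.
   Context: For a permutation group $G$ on $\Omega$ and a map $f:\Omega\to\Omega$ which is not a permutation, $G$ synchronizes $f$ if the semigroup $\langle G,f\rangle$ generated by $G$ and $f$ contains a constant map. The kernel of $f$ is the partition of $\Omega$ into the nonempty inverse images $\{x f^{-1}\}$ of points $x$ in the image of $f$; the kernel type of $f$ is the partition of $n=|\Omega|$ given by the sizes of the parts of the kernel. Thus kernel type $(k,1,\ldots,1)$ means exactly one kernel class has size $k$ and all others are singletons. A block of imprimitivity is a block of a nontrivial $G$-invariant partition of $\Omega$ (one which is neither the partition into singletons nor the partition with one part). *)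

theory Defs
  imports "HOL-Algebra.Bij" "HOL-Library.Disjoint_Sets" "HOL-Library.FuncSet"
begin

inductive_set gen_semigroup :: "'a set \<Rightarrow> ('a \<Rightarrow> 'a) set \<Rightarrow> ('a \<Rightarrow> 'a) \<Rightarrow> ('a \<Rightarrow> 'a) set"
  for \<Omega> G f where
  gen_perm: "g \<in> G \<Longrightarrow> g \<in> gen_semigroup \<Omega> G f"
| gen_map: "f \<in> gen_semigroup \<Omega> G f"
| gen_comp: "s \<in> gen_semigroup \<Omega> G f \<Longrightarrow> t \<in> gen_semigroup \<Omega> G f
     \<Longrightarrow> compose \<Omega> t s \<in> gen_semigroup \<Omega> G f"

definition synchronizes :: "'a set \<Rightarrow> ('a \<Rightarrow> 'a) set \<Rightarrow> ('a \<Rightarrow> 'a) \<Rightarrow> bool" where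
  "synchronizes \<Omega> G f \<longleftrightarrow>
     (\<exists>h \<in> gen_semigroup \<Omega> G f. \<exists>c \<in> \<Omega>. \<forall>x \<in> \<Omega>. h x = c)"

definition kernel :: "'a set \<Rightarrow> ('a \<Rightarrow> 'a) \<Rightarrow> 'a set set" where
  "kernel \<Omega> f = {{x \<in> \<Omega>. f x = y} | y. y \<in> f ` \<Omega>}"

definition kernel_type_k1 :: "'a set \<Rightarrow> ('a \<Rightarrow> 'a) \<Rightarrow> nat \<Rightarrow> bool" where
  "kernel_type_k1 \<Omega> f k \<longleftrightarrow>
     (\<exists>B \<in> kernel \<Omega> f. card B = k \<and> (\<forall>C \<in> kernel \<Omega> f. C \<noteq> B \<longrightarrow> card C = 1))"

definition transitive_on :: "'a set \<Rightarrow> ('a \<Rightarrow> 'a) set \<Rightarrow> bool" where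
  "transitive_on \<Omega> G \<longleftrightarrow> (\<forall>x \<in> \<Omega>. \<forall>y \<in> \<Omega>. \<exists>g \<in> G. g x = y)"

definition G_invariant_partition :: "'a set \<Rightarrow> ('a \<Rightarrow> 'a) set \<Rightarrow> 'a set set \<Rightarrow> bool" where
  "G_invariant_partition \<Omega> G P \<longleftrightarrow>
     partition_on \<Omega> P \<and> (\<forall>g \<in> G. \<forall>B \<in> P. g ` B \<in> P)"

definition nontrivial_partition :: "'a set \<Rightarrow> 'a set set \<Rightarrow> bool" where
  "nontrivial_partition \<Omega> P \<longleftrightarrow> P \<noteq> {{x} | x. x \<in> \<Omega>} \<and> P \<noteq> {\<Omega>}"

definition imprimitive_with_block_ge :: "'a set \<Rightarrow> ('a \<Rightarrow> 'a) set \<Rightarrow> nat \<Rightarrow> bool" where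
  "imprimitive_with_block_ge \<Omega> G k \<longleftrightarrow>
     (\<exists>P. G_invariant_partition \<Omega> G P \<and> nontrivial_partition \<Omega> P \<and>
          (\<exists>B \<in> P. card B \<ge> k))"

end

theory Submission imports Defs begin

definition coll :: "'a set \<Rightarrow> ('a \<Rightarrow> 'a) set \<Rightarrow> ('a \<Rightarrow> 'a) \<Rightarrow> 'a \<Rightarrow> 'a \<Rightarrow> bool" where
  "coll \<Omega> G f x y \<longleftrightarrow> (\<exists>m\<in>gen_semigroup \<Omega> G f. m x = m y)"

lemma G_Bij: "subgroup G (BijGroup \<Omega>) \<Longrightarrow> g \<in> G \<Longrightarrow> g \<in> Bij \<Omega>"
  using subgroup.subset by (fastforce simp: BijGroup_def)

lemma G_bij: "subgroup G (BijGroup \<Omega>) \<Longrightarrow> g \<in> G \<Longrightarrow> bij_betw g \<Omega> \<Omega>"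
  using G_Bij by (fastforce simp: Bij_def)

lemma gen_funcset:
  assumes sg: "subgroup G (BijGroup \<Omega>)" and f: "f \<in> \<Omega> \<rightarrow> \<Omega>"
    and h: "h \<in> gen_semigroup \<Omega> G f"
  shows "h \<in> \<Omega> \<rightarrow> \<Omega>"
  using h
proof (induction rule: gen_semigroup.induct)
  case (gen_perm g)
  then show ?case using G_bij[OF sg] bij_betw_imp_funcset by blast
next
  case gen_map
  then show ?case using f by blast
next
  case (gen_comp s t)
  then show ?case by (auto simp: compose_def Pi_def)
qed

lemma coll_G:
  assumes sg: "subgroup G (BijGroup \<Omega>)" and g: "g \<in> G" and x: "x \<in> \<Omega>" and y: "y \<in> \<Omega>"
  shows "coll \<Omega> G f (g x) (g y) \<longleftrightarrow> coll \<Omega> G f x y"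
proof
  assume "coll \<Omega> G f (g x) (g y)"
  then obtain m where m: "m \<in> gen_semigroup \<Omega> G f" "m (g x) = m (g y)" by (auto simp: coll_def)
  have "compose \<Omega> m g \<in> gen_semigroup \<Omega> G f"
    by (rule gen_semigroup.gen_comp[OF gen_semigroup.gen_perm[OF g] m(1)])
  moreover have "compose \<Omega> m g x = compose \<Omega> m g y" using m x y by (simp add: compose_def)
  ultimately show "coll \<Omega> G f x y" by (auto simp: coll_def)
next
  assume "coll \<Omega> G f x y"
  then obtain m where m: "m \<in> gen_semigroup \<Omega> G f" "m x = m y" by (auto simp: coll_def)
  define gi where "gi = m_inv (BijGroup \<Omega>) g"
  have gi: "gi \<in> G" unfolding gi_def using subgroup.m_inv_closed[OF sg g] by simp
  have gi_eq: "gi = (\<lambda>x \<in> \<Omega>. (inv_into \<Omega> g) x)" unfolding gi_def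
    using inv_BijGroup G_Bij[OF sg g] by blast
  have bij: "bij_betw g \<Omega> \<Omega>" using G_bij[OF sg g] .
  have gx: "g x \<in> \<Omega>" "g y \<in> \<Omega>" using bij x y bij_betwE by blast+
  have "gi (g x) = x" "gi (g y) = y" using gx x y bij gi_eq
    by (auto simp: bij_betw_def inv_into_f_f)
  have "compose \<Omega> m gi \<in> gen_semigroup \<Omega> G f"
    by (rule gen_semigroup.gen_comp[OF gen_semigroup.gen_perm[OF gi] m(1)])
  moreover have "compose \<Omega> m gi (g x) = compose \<Omega> m gi (g y)"
    using m gx \<open>gi (g x) = x\<close> \<open>gi (g y) = y\<close> by (simp add: compose_def)
  ultimately show "coll \<Omega> G f (g x) (g y)" by (auto simp: coll_def)
qed

lemma G_surj: "subgroup G (BijGroup \<Omega>) \<Longrightarrow> g \<in> G \<Longrightarrow> y \<in> \<Omega> \<Longrightarrow> \<exists>x\<in>\<Omega>. g x = y"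
  using G_bij by (metis bij_betw_iff_bijections)

definition Nb where "Nb \<Omega> G f x = {z \<in> \<Omega>. \<not> coll \<Omega> G f x z}"

lemma Nb_img:
  assumes sg: "subgroup G (BijGroup \<Omega>)" and g: "g \<in> G" and x: "x \<in> \<Omega>"
  shows "Nb \<Omega> G f (g x) = g ` Nb \<Omega> G f x"
proof
  show "Nb \<Omega> G f (g x) \<subseteq> g ` Nb \<Omega> G f x"
  proof
    fix z assume z: "z \<in> Nb \<Omega> G f (g x)"
    then obtain y where y: "y \<in> \<Omega>" "g y = z" using G_surj[OF sg g] by (auto simp: Nb_def)
    then show "z \<in> g ` Nb \<Omega> G f x" using z coll_G[OF sg g x y(1)] by (auto simp: Nb_def)
  qed
  show "g ` Nb \<Omega> G f x \<subseteq> Nb \<Omega> G f (g x)"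
    using coll_G[OF sg g x] G_bij[OF sg g] bij_betwE by (fastforce simp: Nb_def)
qed

lemma Nb_card:
  assumes sg: "subgroup G (BijGroup \<Omega>)" and tr: "transitive_on \<Omega> G"
    and x: "x \<in> \<Omega>" and y: "y \<in> \<Omega>"
  shows "card (Nb \<Omega> G f y) = card (Nb \<Omega> G f x)"
proof -
  obtain g where g: "g \<in> G" "g x = y" using tr x y by (auto simp: transitive_on_def)
  have "inj_on g (Nb \<Omega> G f x)" using G_bij[OF sg g(1)]
    by (auto simp: bij_betw_def Nb_def intro: inj_on_subset)
  then show ?thesis using Nb_img[OF sg g(1) x] g(2) by (simp add: card_image)
qed

definition twin where "twin \<Omega> G f x y \<longleftrightarrow> (\<forall>z\<in>\<Omega>. coll \<Omega> G f x z \<longleftrightarrow> coll \<Omega> G f y z)"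

lemma twin_G:
  assumes sg: "subgroup G (BijGroup \<Omega>)" and g: "g \<in> G" and x: "x \<in> \<Omega>" and y: "y \<in> \<Omega>"
  shows "twin \<Omega> G f (g x) (g y) \<longleftrightarrow> twin \<Omega> G f x y"
proof
  assume a: "twin \<Omega> G f (g x) (g y)"
  show "twin \<Omega> G f x y" unfolding twin_def
  proof
    fix z assume z: "z \<in> \<Omega>"
    have gz: "g z \<in> \<Omega>" using G_bij[OF sg g] z bij_betwE by blast
    show "coll \<Omega> G f x z \<longleftrightarrow> coll \<Omega> G f y z"
      using a gz coll_G[OF sg g x z] coll_G[OF sg g y z] by (auto simp: twin_def)
  qed
next
  assume a: "twin \<Omega> G f x y"
  show "twin \<Omega> G f (g x) (g y)" unfolding twin_def
  proof
    fix z assume z: "z \<in> \<Omega>"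
    then obtain w where w: "w \<in> \<Omega>" "g w = z" using G_surj[OF sg g] by blast
    show "coll \<Omega> G f (g x) z \<longleftrightarrow> coll \<Omega> G f (g y) z"
      using a w coll_G[OF sg g x w(1)] coll_G[OF sg g y w(1)] by (auto simp: twin_def)
  qed
qed


lemma pair_synch:
  assumes fin: "finite \<Omega>" and sg: "subgroup G (BijGroup \<Omega>)" and f: "f \<in> \<Omega> \<rightarrow> \<Omega>"
    and ne: "\<Omega> \<noteq> {}"
    and all: "\<forall>x\<in>\<Omega>. \<forall>y\<in>\<Omega>. coll \<Omega> G f x y"
  shows "synchronizes \<Omega> G f"
proof -
  let ?M = "gen_semigroup \<Omega> G f"
  have "f \<in> ?M" by (rule gen_semigroup.gen_map)
  then obtain h where h: "h \<in> ?M" and hmin: "\<And>h'. h' \<in> ?M \<Longrightarrow> card (h ` \<Omega>) \<le> card (h' ` \<Omega>)"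
    using ex_has_least_nat[of "\<lambda>h. h \<in> ?M" f "\<lambda>h. card (h ` \<Omega>)"] by blast
  have hsub: "h ` \<Omega> \<subseteq> \<Omega>" using gen_funcset[OF sg f h] by auto
  have finh: "finite (h ` \<Omega>)" using fin by simp
  have "card (h ` \<Omega>) \<noteq> 0" using finh ne by simp
  moreover have "\<not> card (h ` \<Omega>) \<ge> 2"
  proof
    assume "card (h ` \<Omega>) \<ge> 2"
    then obtain u v where uv: "u \<in> h ` \<Omega>" "v \<in> h ` \<Omega>" "u \<noteq> v"
      using card_le_Suc0_iff_eq[OF finh] by (metis One_nat_def not_less_eq_eq numeral_2_eq_2)
    then have "coll \<Omega> G f u v" using all hsub by blast
    then obtain m where m: "m \<in> ?M" "m u = m v" by (auto simp: coll_def)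
    have c: "compose \<Omega> m h \<in> ?M" by (rule gen_semigroup.gen_comp[OF h m(1)])
    have img: "compose \<Omega> m h ` \<Omega> = m ` (h ` \<Omega>)" by (auto simp: compose_def)
    have "\<not> inj_on m (h ` \<Omega>)" using uv m(2) by (auto simp: inj_on_def)
    then have "card (m ` (h ` \<Omega>)) < card (h ` \<Omega>)"
      using finh card_image_le inj_on_iff_eq_card le_neq_implies_less by metis
    then show False using hmin[OF c] img by simp
  qed
  ultimately have "card (h ` \<Omega>) = 1" by linarith
  then obtain c where c: "h ` \<Omega> = {c}" by (auto simp: card_Suc_eq)
  then have "c \<in> \<Omega>" using hsub by auto
  moreover have "\<forall>x\<in>\<Omega>. h x = c" using c by auto
  ultimately show ?thesis using h by (auto simp: synchronizes_def)
qed

lemma kernel_twins: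
  assumes fin: "finite \<Omega>" and sg: "subgroup G (BijGroup \<Omega>)" and tr: "transitive_on \<Omega> G"
    and f: "f \<in> \<Omega> \<rightarrow> \<Omega>"
    and B0: "B0 = {x \<in> \<Omega>. f x = y0}"
    and oth: "\<And>C. C \<in> kernel \<Omega> f \<Longrightarrow> C \<noteq> B0 \<Longrightarrow> card C = 1"
    and a: "a \<in> B0" and b: "b \<in> B0"
  shows "twin \<Omega> G f a b"
proof -
  let ?M = "gen_semigroup \<Omega> G f"
  have fM: "f \<in> ?M" by (rule gen_semigroup.gen_map)
  have key: "f x1 = y0" if x: "x1 \<in> \<Omega>" "x2 \<in> \<Omega>" "f x1 = f x2" "x1 \<noteq> x2" for x1 x2
  proof -
    let ?C = "{x \<in> \<Omega>. f x = f x1}"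
    have "?C \<in> kernel \<Omega> f" using x by (auto simp: kernel_def)
    moreover have "card ?C \<noteq> 1"
    proof
      assume "card ?C = 1"
      then obtain c where c: "?C = {c}" by (auto simp: card_Suc_eq)
      have "x1 \<in> ?C" "x2 \<in> ?C" using x by auto
      then show False using c x(4) by (metis singletonD)
    qed
    ultimately have "?C = B0" using oth by blast
    then show ?thesis using x B0 by auto
  qed
  have sub: "Nb \<Omega> G f b \<subseteq> Nb \<Omega> G f a" if a: "a \<in> B0" and b: "b \<in> B0" for a b
  proof -
    have aO: "a \<in> \<Omega>" and bO: "b \<in> \<Omega>" and fab: "f a = y0" "f b = y0" using a b B0 by auto
    let ?U = "Nb \<Omega> G f a \<union> Nb \<Omega> G f b"
    have inj: "inj_on f ?U"
    proof (rule inj_onI, rule ccontr)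
      fix z1 z2 assume z: "z1 \<in> ?U" "z2 \<in> ?U" "f z1 = f z2" "z1 \<noteq> z2"
      have zO: "z1 \<in> \<Omega>" "z2 \<in> \<Omega>" using z by (auto simp: Nb_def)
      have "f z1 = y0" using key[OF zO z(3,4)] .
      then have "coll \<Omega> G f a z1" "coll \<Omega> G f b z1" using fM fab by (auto simp: coll_def)
      then show False using z(1) by (auto simp: Nb_def)
    qed
    have faO: "f a \<in> \<Omega>" using f aO by auto
    have img: "f ` ?U \<subseteq> Nb \<Omega> G f (f a)"
    proof
      fix w assume "w \<in> f ` ?U"
      then obtain z where z: "z \<in> ?U" "w = f z" by auto
      have zO: "z \<in> \<Omega>" using z by (auto simp: Nb_def)
      have "\<not> coll \<Omega> G f (f a) (f z)"
      proof
        assume "coll \<Omega> G f (f a) (f z)"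
        then obtain m where m: "m \<in> ?M" "m (f a) = m (f z)" by (auto simp: coll_def)
        have c: "compose \<Omega> m f \<in> ?M" by (rule gen_semigroup.gen_comp[OF fM m(1)])
        have "compose \<Omega> m f a = compose \<Omega> m f z" "compose \<Omega> m f b = compose \<Omega> m f z"
          using m aO bO zO fab by (auto simp: compose_def)
        then have "coll \<Omega> G f a z" "coll \<Omega> G f b z" using c by (auto simp: coll_def)
        then show False using z(1) by (auto simp: Nb_def)
      qed
      then show "w \<in> Nb \<Omega> G f (f a)" using z f zO by (auto simp: Nb_def)
    qed
    have finU: "finite ?U" using fin by (auto simp: Nb_def)
    have "card ?U = card (f ` ?U)" using inj by (simp add: card_image)
    also have "\<dots> \<le> card (Nb \<Omega> G f (f a))"
      using img fin by (intro card_mono) (auto simp: Nb_def)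
    also have "\<dots> = card (Nb \<Omega> G f a)" using Nb_card[OF sg tr aO faO] .
    finally have "card ?U \<le> card (Nb \<Omega> G f a)" .
    then have "Nb \<Omega> G f a = ?U"
      using card_subset_eq[OF finU, of "Nb \<Omega> G f a"] card_mono[OF finU, of "Nb \<Omega> G f a"] by auto
    then show ?thesis by blast
  qed
  have "Nb \<Omega> G f a = Nb \<Omega> G f b" using sub[OF a b] sub[OF b a] by blast
  moreover have "a \<in> \<Omega>" "b \<in> \<Omega>" using a b B0 by auto
  ultimately show ?thesis unfolding twin_def Nb_def by blast
qed


lemma dir_back:
  assumes fin: "finite \<Omega>" and sg: "subgroup G (BijGroup \<Omega>)" and tr: "transitive_on \<Omega> G"
    and k: "k > 1" and fE: "f \<in> \<Omega> \<rightarrow>\<^sub>E \<Omega>" and kt: "kernel_type_k1 \<Omega> f k"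
    and ns: "\<not> synchronizes \<Omega> G f"
  shows "imprimitive_with_block_ge \<Omega> G k"
proof -
  have f: "f \<in> \<Omega> \<rightarrow> \<Omega>" using fE by (simp add: PiE_def)
  obtain B0 where B0k: "B0 \<in> kernel \<Omega> f" "card B0 = k"
    and oth: "\<And>C. C \<in> kernel \<Omega> f \<Longrightarrow> C \<noteq> B0 \<Longrightarrow> card C = 1"
    using kt by (auto simp: kernel_type_k1_def)
  obtain y0 where B0: "B0 = {x \<in> \<Omega>. f x = y0}" using B0k(1) by (auto simp: kernel_def)
  have "B0 \<noteq> {}" using B0k(2) k by auto
  then obtain a where a: "a \<in> B0" by auto
  have aO: "a \<in> \<Omega>" using a B0 by auto
  define r where "r = {(x,y). x \<in> \<Omega> \<and> y \<in> \<Omega> \<and> twin \<Omega> G f x y}"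
  have eq: "equiv \<Omega> r" unfolding r_def equiv_def refl_on_def sym_def trans_def twin_def by auto
  have cls: "r `` {x} = {y \<in> \<Omega>. twin \<Omega> G f x y}" if "x \<in> \<Omega>" for x
    using that by (auto simp: r_def)
  define P where "P = \<Omega> // r"
  have part: "partition_on \<Omega> P" unfolding P_def by (rule partition_on_quotient[OF eq])
  have inv: "g ` C \<in> P" if g: "g \<in> G" and C: "C \<in> P" for g C
  proof -
    obtain x where x: "x \<in> \<Omega>" "C = r `` {x}" using C by (auto simp: P_def quotient_def)
    have gx: "g x \<in> \<Omega>" using G_bij[OF sg g] x bij_betwE by blast
    have "g ` (r `` {x}) = r `` {g x}"
    proof
      show "g ` (r `` {x}) \<subseteq> r `` {g x}"
        using twin_G[OF sg g x(1)] G_bij[OF sg g] bij_betwE cls[OF x(1)] cls[OF gx] by fastforce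
      show "r `` {g x} \<subseteq> g ` (r `` {x})"
      proof
        fix z assume "z \<in> r `` {g x}"
        then have z: "z \<in> \<Omega>" "twin \<Omega> G f (g x) z" using cls[OF gx] by auto
        then obtain w where w: "w \<in> \<Omega>" "g w = z" using G_surj[OF sg g] by blast
        then show "z \<in> g ` (r `` {x})" using z twin_G[OF sg g x(1) w(1)] cls[OF x(1)] by auto
      qed
    qed
    then show ?thesis using x gx by (auto simp: P_def intro: quotientI)
  qed
  have Ca: "r `` {a} \<in> P" using aO by (auto simp: P_def intro: quotientI)
  have B0sub: "B0 \<subseteq> r `` {a}"
    using kernel_twins[OF fin sg tr f B0 oth a] B0 cls[OF aO] by auto
  have finCa: "finite (r `` {a})" using fin cls[OF aO] by auto
  have cardCa: "card (r `` {a}) \<ge> k" using card_mono[OF finCa B0sub] B0k(2) by simp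
  have ns1: "P \<noteq> {{x} | x. x \<in> \<Omega>}"
  proof
    assume "P = {{x} | x. x \<in> \<Omega>}"
    then obtain x where "r `` {a} = {x}" using Ca by auto
    then show False using cardCa k by simp
  qed
  obtain x y where xy: "x \<in> \<Omega>" "y \<in> \<Omega>" "\<not> coll \<Omega> G f x y"
    using pair_synch[OF fin sg f _ ] ns aO by blast
  have "coll \<Omega> G f y y" using gen_semigroup.gen_map by (auto simp: coll_def)
  then have "y \<notin> r `` {x}" using xy cls[OF xy(1)] by (auto simp: twin_def)
  moreover have "r `` {x} \<in> P" using xy by (auto simp: P_def intro: quotientI)
  ultimately have ns2: "P \<noteq> {\<Omega>}" using xy by auto
  show ?thesis unfolding imprimitive_with_block_ge_def G_invariant_partition_def nontrivial_partition_def
    using part inv ns1 ns2 Ca cardCa by blast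
qed


lemma part_eq: "partition_on \<Omega> P \<Longrightarrow> C \<in> P \<Longrightarrow> D \<in> P \<Longrightarrow> x \<in> C \<Longrightarrow> x \<in> D \<Longrightarrow> C = D"
  using partition_onD2 disjointD by blast

lemma dir_fwd:
  assumes fin: "finite \<Omega>" and sg: "subgroup G (BijGroup \<Omega>)"
    and k: "k > 1" and imp: "imprimitive_with_block_ge \<Omega> G k"
  shows "\<exists>f \<in> \<Omega> \<rightarrow>\<^sub>E \<Omega>. kernel_type_k1 \<Omega> f k \<and> \<not> synchronizes \<Omega> G f"
proof -
  obtain P B where part: "partition_on \<Omega> P" and inv: "\<And>g C. g \<in> G \<Longrightarrow> C \<in> P \<Longrightarrow> g ` C \<in> P"
    and ntr: "P \<noteq> {\<Omega>}" and B: "B \<in> P" "card B \<ge> k"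
    using imp by (auto simp: imprimitive_with_block_ge_def G_invariant_partition_def nontrivial_partition_def)
  have BO: "B \<subseteq> \<Omega>" using part B(1) partition_onD1 by blast
  obtain S where S: "S \<subseteq> B" "card S = k" "finite S" using obtain_subset_with_card_n[OF B(2)] by blast
  have "S \<noteq> {}" using S k by auto
  then obtain s0 where s0: "s0 \<in> S" by auto
  define f where "f = (\<lambda>x. if x \<in> \<Omega> then (if x \<in> S then s0 else x) else undefined)"
  have SO: "S \<subseteq> \<Omega>" using S BO by auto
  have fE: "f \<in> \<Omega> \<rightarrow>\<^sub>E \<Omega>" using s0 SO by (auto simp: f_def)
  have fF: "f \<in> \<Omega> \<rightarrow> \<Omega>" using fE by (simp add: PiE_def)
  have kt: "kernel_type_k1 \<Omega> f k" unfolding kernel_type_k1_def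
  proof (intro bexI conjI ballI impI)
    have Seq: "{x \<in> \<Omega>. f x = s0} = S" using s0 SO by (auto simp: f_def)
    show "S \<in> kernel \<Omega> f" unfolding kernel_def using s0 SO Seq[symmetric]
      by (auto intro!: exI[of _ s0] simp: f_def)
    show "card S = k" by (rule S(2))
    fix C assume C: "C \<in> kernel \<Omega> f" "C \<noteq> S"
    then obtain y where y: "y \<in> f ` \<Omega>" "C = {x \<in> \<Omega>. f x = y}" by (auto simp: kernel_def)
    have "y \<noteq> s0" using C(2) y(2) Seq by auto
    then obtain x0 where x0: "x0 \<in> \<Omega>" "x0 \<notin> S" "y = x0" using y(1) by (auto simp: f_def split: if_splits)
    have "C = {x0}" using y(2) x0 \<open>y \<noteq> s0\<close> by (auto simp: f_def)
    then show "card C = 1" by simp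
  qed
  let ?M = "gen_semigroup \<Omega> G f"
  define Inv where "Inv h \<longleftrightarrow> (\<forall>C\<in>P. \<exists>D\<in>P. h ` C \<subseteq> D) \<and> (\<forall>D\<in>P. \<exists>x\<in>\<Omega>. h x \<in> D)" for h
  have PO: "C \<subseteq> \<Omega>" if "C \<in> P" for C using part that partition_onD1 by blast
  have Pne: "C \<noteq> {}" if "C \<in> P" for C using part that partition_onD3 by blast
  have cov: "\<exists>D\<in>P. x \<in> D" if "x \<in> \<Omega>" for x using part that partition_onD1 by blast
  have invM: "Inv h" if "h \<in> ?M" for h
    using that
  proof (induction rule: gen_semigroup.induct)
    case (gen_perm g)
    have bij: "bij_betw g \<Omega> \<Omega>" using G_bij[OF sg gen_perm] .
    have "\<exists>x\<in>\<Omega>. g x \<in> D" if DP: "D \<in> P" for D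
    proof -
      obtain y where "y \<in> D" using Pne[OF DP] by auto
      then have "y \<in> \<Omega>" using PO[OF DP] by auto
      then obtain x where "x \<in> \<Omega>" "g x = y" using G_surj[OF sg gen_perm] by blast
      then show ?thesis using \<open>y \<in> D\<close> by auto
    qed
    then show ?case unfolding Inv_def using inv[OF gen_perm] by blast
  next
    case gen_map
    have fC: "f ` C \<subseteq> C" if C: "C \<in> P" for C
    proof
      fix w assume "w \<in> f ` C"
      then obtain x where x: "x \<in> C" "w = f x" by auto
      have xO: "x \<in> \<Omega>" using PO[OF C] x by auto
      show "w \<in> C"
      proof (cases "x \<in> S")
        case True
        then have "C = B" using part_eq[OF part C B(1) x(1)] S by auto
        then show ?thesis using x xO True s0 S by (auto simp: f_def)
      next
        case False
        then show ?thesis using x xO by (auto simp: f_def)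
      qed
    qed
    have "\<exists>x\<in>\<Omega>. f x \<in> D" if D: "D \<in> P" for D
    proof -
      obtain y where y: "y \<in> D" using Pne[OF D] by auto
      then have "y \<in> \<Omega>" using PO[OF D] by auto
      then show ?thesis using fC[OF D] y by blast
    qed
    then show ?case unfolding Inv_def using fC by blast
  next
    case (gen_comp s t)
    have A: "\<exists>D\<in>P. compose \<Omega> t s ` C \<subseteq> D" if C: "C \<in> P" for C
    proof -
      obtain D1 where D1: "D1 \<in> P" "s ` C \<subseteq> D1" using gen_comp.IH(1) C by (auto simp: Inv_def)
      obtain D2 where D2: "D2 \<in> P" "t ` D1 \<subseteq> D2" using gen_comp.IH(2) D1 by (auto simp: Inv_def)
      have "compose \<Omega> t s ` C \<subseteq> D2" using D1 D2 PO[OF C] by (auto simp: compose_def)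
      then show ?thesis using D2 by blast
    qed
    have Bm: "\<exists>x\<in>\<Omega>. compose \<Omega> t s x \<in> D" if D: "D \<in> P" for D
    proof -
      obtain y where y: "y \<in> \<Omega>" "t y \<in> D" using gen_comp.IH(2) D by (auto simp: Inv_def)
      obtain D' where D': "D' \<in> P" "y \<in> D'" using cov[OF y(1)] by blast
      obtain x where x: "x \<in> \<Omega>" "s x \<in> D'" using gen_comp.IH(1) D' by (auto simp: Inv_def)
      obtain D'' where D'': "D'' \<in> P" "t ` D' \<subseteq> D''" using gen_comp.IH(2) D' by (auto simp: Inv_def)
      have "D'' = D" using part_eq[OF part D''(1) D, of "t y"] D'' D' y by auto
      then have "t (s x) \<in> D" using D'' x by auto
      then show ?thesis using x by (auto simp: compose_def)
    qed
    show ?case unfolding Inv_def using A Bm by blast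
  qed
  obtain D2 where D2: "D2 \<in> P" "D2 \<noteq> B"
  proof -
    have "P \<noteq> {B}"
    proof
      assume "P = {B}"
      then have "B = \<Omega>" using partition_onD1[OF part] by auto
      then show False using ntr \<open>P = {B}\<close> by simp
    qed
    then show thesis using that B(1) by blast
  qed
  have "\<not> synchronizes \<Omega> G f"
  proof
    assume "synchronizes \<Omega> G f"
    then obtain h c where h: "h \<in> ?M" "c \<in> \<Omega>" "\<forall>x\<in>\<Omega>. h x = c" by (auto simp: synchronizes_def)
    have "c \<in> B" "c \<in> D2" using invM[OF h(1)] B(1) D2(1) h(3) by (auto simp: Inv_def)
    then show False using part_eq[OF part B(1) D2(1)] D2(2) by auto
  qed
  then show ?thesis using fE kt by blast
qed

theorem theorem2:
  fixes \<Omega> :: "'a set" and G :: "('a \<Rightarrow> 'a) set" and k :: nat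
  assumes "finite \<Omega>"
    and "subgroup G (BijGroup \<Omega>)"
    and "transitive_on \<Omega> G"
    and "k > 1"
  shows "imprimitive_with_block_ge \<Omega> G k \<longleftrightarrow>
         (\<exists>f \<in> \<Omega> \<rightarrow>\<^sub>E \<Omega>. kernel_type_k1 \<Omega> f k \<and> \<not> synchronizes \<Omega> G f)"
  using dir_fwd[OF assms(1,2,4)] dir_back[OF assms] by blast

end
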